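(* Let $\mathbb{C}$ be a pointed protomodular category. An object $X$ of $\mathbb{C}$ is strong-complete if and only if $X$ is proto-complete and has trivial center.
   Context: $\mathbb{C}$ is pointed with finite limits; it is protomodular if the split short five lemma holds (for a morphism of split extensions whose kernel and codomain components are isomorphisms, the middle component is an isomorphism). A protosplit monomorphism is a kernel of a split epimorphism. An object $X$ is proto-complete if every protosplit monomorphism with domain $X$ is a split monomorphism, and strong-complete if every protosplit monomorphism with domain $X$ is a split monomorphism with a unique section (retraction). The center of $X$ is the terminal object among morphisms $g:B\to X$ commuting with $1_X$ (i.e. such that some $\varphi:B\times X\to X$ has $\varphi\langle1,0\rangle=g$, $\varphi\langle0,1\rangle=1_X$), with morphisms being maps over $X$; $X$ has trivial center if the center is the zero object. *)

theory Defs
  imports Main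
begin

record ('o, 'a) cat =
  Obj  :: "'o set"
  Arr  :: "'a set"
  Dom  :: "'a \<Rightarrow> 'o"
  Cod  :: "'a \<Rightarrow> 'o"
  Id   :: "'o \<Rightarrow> 'a"
  Comp :: "'a \<Rightarrow> 'a \<Rightarrow> 'a"   (* Comp C g f = g \<circ> f *)

definition hom :: "('o, 'a) cat \<Rightarrow> 'a \<Rightarrow> 'o \<Rightarrow> 'o \<Rightarrow> bool" where
  "hom C f X Y \<longleftrightarrow> f \<in> Arr C \<and> Dom C f = X \<and> Cod C f = Y"

definition category :: "('o, 'a) cat \<Rightarrow> bool" where
  "category C \<longleftrightarrow>
     (\<forall>f \<in> Arr C. Dom C f \<in> Obj C \<and> Cod C f \<in> Obj C) \<and>
     (\<forall>X \<in> Obj C. hom C (Id C X) X X) \<and>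
     (\<forall>f g X Y Z. hom C f X Y \<longrightarrow> hom C g Y Z \<longrightarrow> hom C (Comp C g f) X Z) \<and>
     (\<forall>f X Y. hom C f X Y \<longrightarrow> Comp C f (Id C X) = f \<and> Comp C (Id C Y) f = f) \<and>
     (\<forall>f g h W X Y Z. hom C f W X \<longrightarrow> hom C g X Y \<longrightarrow> hom C h Y Z \<longrightarrow>
        Comp C h (Comp C g f) = Comp C (Comp C h g) f)"

definition iso :: "('o, 'a) cat \<Rightarrow> 'a \<Rightarrow> bool" where
  "iso C f \<longleftrightarrow> f \<in> Arr C \<and> (\<exists>g. hom C g (Cod C f) (Dom C f) \<and>
       Comp C g f = Id C (Dom C f) \<and> Comp C f g = Id C (Cod C f))"

definition terminal_obj :: "('o, 'a) cat \<Rightarrow> 'o \<Rightarrow> bool" where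
  "terminal_obj C T \<longleftrightarrow> T \<in> Obj C \<and> (\<forall>Y \<in> Obj C. \<exists>!f. hom C f Y T)"

definition initial_obj :: "('o, 'a) cat \<Rightarrow> 'o \<Rightarrow> bool" where
  "initial_obj C I \<longleftrightarrow> I \<in> Obj C \<and> (\<forall>Y \<in> Obj C. \<exists>!f. hom C f I Y)"

definition zero_obj :: "('o, 'a) cat \<Rightarrow> 'o \<Rightarrow> bool" where
  "zero_obj C Z \<longleftrightarrow> terminal_obj C Z \<and> initial_obj C Z"

definition pointed :: "('o, 'a) cat \<Rightarrow> bool" where
  "pointed C \<longleftrightarrow> category C \<and> (\<exists>Z. zero_obj C Z)"

definition zero_arr :: "('o, 'a) cat \<Rightarrow> 'o \<Rightarrow> 'o \<Rightarrow> 'a" where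
  "zero_arr C X Y = (THE f. hom C f X Y \<and>
      (\<exists>Z a b. zero_obj C Z \<and> hom C a X Z \<and> hom C b Z Y \<and> f = Comp C b a))"

definition is_pullback :: "('o, 'a) cat \<Rightarrow> 'a \<Rightarrow> 'a \<Rightarrow> 'o \<Rightarrow> 'a \<Rightarrow> 'a \<Rightarrow> bool" where
  "is_pullback C f g P p q \<longleftrightarrow> Cod C f = Cod C g \<and>
     hom C f (Dom C f) (Cod C f) \<and> hom C g (Dom C g) (Cod C g) \<and>
     hom C p P (Dom C f) \<and> hom C q P (Dom C g) \<and> Comp C f p = Comp C g q \<and>
     (\<forall>W u v. hom C u W (Dom C f) \<longrightarrow> hom C v W (Dom C g) \<longrightarrow> Comp C f u = Comp C g v \<longrightarrow>
        (\<exists>!h. hom C h W P \<and> Comp C p h = u \<and> Comp C q h = v))"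

definition finite_limits :: "('o, 'a) cat \<Rightarrow> bool" where
  "finite_limits C \<longleftrightarrow> (\<exists>T. terminal_obj C T) \<and>
     (\<forall>f g. f \<in> Arr C \<longrightarrow> g \<in> Arr C \<longrightarrow> Cod C f = Cod C g \<longrightarrow>
        (\<exists>P p q. is_pullback C f g P p q))"

definition is_product :: "('o, 'a) cat \<Rightarrow> 'o \<Rightarrow> 'o \<Rightarrow> 'o \<Rightarrow> 'a \<Rightarrow> 'a \<Rightarrow> bool" where
  "is_product C A B P p1 p2 \<longleftrightarrow> hom C p1 P A \<and> hom C p2 P B \<and>
     (\<forall>W u v. hom C u W A \<longrightarrow> hom C v W B \<longrightarrow>
        (\<exists>!h. hom C h W P \<and> Comp C p1 h = u \<and> Comp C p2 h = v))"

definition is_kernel :: "('o, 'a) cat \<Rightarrow> 'a \<Rightarrow> 'a \<Rightarrow> bool" where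
  "is_kernel C f k \<longleftrightarrow> f \<in> Arr C \<and> hom C k (Dom C k) (Dom C f) \<and>
     Comp C f k = zero_arr C (Dom C k) (Cod C f) \<and>
     (\<forall>W u. hom C u W (Dom C f) \<longrightarrow> Comp C f u = zero_arr C W (Cod C f) \<longrightarrow>
        (\<exists>!h. hom C h W (Dom C k) \<and> Comp C k h = u))"

definition split_epi :: "('o, 'a) cat \<Rightarrow> 'a \<Rightarrow> bool" where
  "split_epi C p \<longleftrightarrow> p \<in> Arr C \<and>
     (\<exists>s. hom C s (Cod C p) (Dom C p) \<and> Comp C p s = Id C (Cod C p))"

definition split_mono :: "('o, 'a) cat \<Rightarrow> 'a \<Rightarrow> bool" where
  "split_mono C m \<longleftrightarrow> m \<in> Arr C \<and>
     (\<exists>r. hom C r (Cod C m) (Dom C m) \<and> Comp C r m = Id C (Dom C m))"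

definition split_ext :: "('o, 'a) cat \<Rightarrow> 'a \<Rightarrow> 'a \<Rightarrow> 'a \<Rightarrow> bool" where
  "split_ext C k p s \<longleftrightarrow> is_kernel C p k \<and>
     hom C s (Cod C p) (Dom C p) \<and> Comp C p s = Id C (Cod C p)"

definition split_ext_morph ::
  "('o, 'a) cat \<Rightarrow> 'a \<Rightarrow> 'a \<Rightarrow> 'a \<Rightarrow> 'a \<Rightarrow> 'a \<Rightarrow> 'a \<Rightarrow> 'a \<Rightarrow> 'a \<Rightarrow> 'a \<Rightarrow> bool" where
  "split_ext_morph C k p s k' p' s' u v w \<longleftrightarrow>
     split_ext C k p s \<and> split_ext C k' p' s' \<and>
     hom C u (Dom C k) (Dom C k') \<and> hom C v (Dom C p) (Dom C p') \<and>
     hom C w (Cod C p) (Cod C p') \<and>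
     Comp C v k = Comp C k' u \<and> Comp C p' v = Comp C w p \<and> Comp C v s = Comp C s' w"

definition protomodular :: "('o, 'a) cat \<Rightarrow> bool" where
  "protomodular C \<longleftrightarrow>
     (\<forall>k p s k' p' s' u v w. split_ext_morph C k p s k' p' s' u v w \<longrightarrow>
        iso C u \<longrightarrow> iso C w \<longrightarrow> iso C v)"

definition pointed_protomodular :: "('o, 'a) cat \<Rightarrow> bool" where
  "pointed_protomodular C \<longleftrightarrow> pointed C \<and> finite_limits C \<and> protomodular C"

definition protosplit_mono :: "('o, 'a) cat \<Rightarrow> 'a \<Rightarrow> bool" where
  "protosplit_mono C k \<longleftrightarrow> (\<exists>p. split_epi C p \<and> is_kernel C p k)"

definition proto_complete :: "('o, 'a) cat \<Rightarrow> 'o \<Rightarrow> bool" where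
  "proto_complete C X \<longleftrightarrow>
     (\<forall>k. protosplit_mono C k \<longrightarrow> Dom C k = X \<longrightarrow> split_mono C k)"

definition strong_complete :: "('o, 'a) cat \<Rightarrow> 'o \<Rightarrow> bool" where
  "strong_complete C X \<longleftrightarrow>
     (\<forall>k. protosplit_mono C k \<longrightarrow> Dom C k = X \<longrightarrow>
        (\<exists>!r. hom C r (Cod C k) X \<and> Comp C r k = Id C X))"

text \<open>g : B \<rightarrow> X commutes with 1_X: some \<phi> : B \<times> X \<rightarrow> X with
  \<phi>\<langle>1,0\<rangle> = g and \<phi>\<langle>0,1\<rangle> = 1_X.\<close>
definition commutes_with_id :: "('o, 'a) cat \<Rightarrow> 'o \<Rightarrow> 'a \<Rightarrow> bool" where
  "commutes_with_id C X g \<longleftrightarrow> hom C g (Dom C g) X \<and>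
     (\<exists>P p1 p2 i1 i2 \<phi>. is_product C (Dom C g) X P p1 p2 \<and>
        hom C i1 (Dom C g) P \<and> Comp C p1 i1 = Id C (Dom C g) \<and>
        Comp C p2 i1 = zero_arr C (Dom C g) X \<and>
        hom C i2 X P \<and> Comp C p1 i2 = zero_arr C X (Dom C g) \<and> Comp C p2 i2 = Id C X \<and>
        hom C \<phi> P X \<and> Comp C \<phi> i1 = g \<and> Comp C \<phi> i2 = Id C X)"

definition is_center :: "('o, 'a) cat \<Rightarrow> 'o \<Rightarrow> 'o \<Rightarrow> 'a \<Rightarrow> bool" where
  "is_center C X Z z \<longleftrightarrow> hom C z Z X \<and> commutes_with_id C X z \<and>
     (\<forall>g. commutes_with_id C X g \<longrightarrow>
        (\<exists>!h. hom C h (Dom C g) Z \<and> Comp C z h = g))"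

definition trivial_center :: "('o, 'a) cat \<Rightarrow> 'o \<Rightarrow> bool" where
  "trivial_center C X \<longleftrightarrow> (\<exists>Z z. is_center C X Z z \<and> zero_obj C Z)"

end

theory Submission
  imports Defs
begin

locale ppc =
  fixes C :: "('o, 'a) cat"
  assumes ppm: "pointed_protomodular C"
begin

abbreviation cp (infixr "\<cdot>" 70) where "g \<cdot> f \<equiv> Comp C g f"

lemma cat: "category C" using ppm unfolding pointed_protomodular_def pointed_def by blast
lemma fl: "finite_limits C" using ppm unfolding pointed_protomodular_def by blast
lemma pm: "protomodular C" using ppm unfolding pointed_protomodular_def by blast
lemma ex_zero: "\<exists>Z. zero_obj C Z" using ppm unfolding pointed_protomodular_def pointed_def by blast

lemma homD: "hom C f X Y \<Longrightarrow> f \<in> Arr C \<and> Dom C f = X \<and> Cod C f = Y" by (simp add: hom_def)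
lemma cat1: "\<forall>f \<in> Arr C. Dom C f \<in> Obj C \<and> Cod C f \<in> Obj C"
  using cat unfolding category_def by (elim conjE) assumption
lemma cat2: "\<forall>X \<in> Obj C. hom C (Id C X) X X"
  using cat unfolding category_def by (elim conjE) assumption
lemma cat3: "\<forall>f g X Y Z. hom C f X Y \<longrightarrow> hom C g Y Z \<longrightarrow> hom C (Comp C g f) X Z"
  using cat unfolding category_def by (elim conjE) assumption
lemma cat4: "\<forall>f X Y. hom C f X Y \<longrightarrow> Comp C f (Id C X) = f \<and> Comp C (Id C Y) f = f"
  using cat unfolding category_def by (elim conjE) assumption
lemma cat5: "\<forall>f g h W X Y Z. hom C f W X \<longrightarrow> hom C g X Y \<longrightarrow> hom C h Y Z \<longrightarrow>
        Comp C h (Comp C g f) = Comp C (Comp C h g) f"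
  using cat unfolding category_def by (elim conjE) assumption

lemma hom_objs: "hom C f X Y \<Longrightarrow> X \<in> Obj C \<and> Y \<in> Obj C"
  using cat1 unfolding hom_def by blast
lemma comp: "hom C f X Y \<Longrightarrow> hom C g Y Z \<Longrightarrow> hom C (g \<cdot> f) X Z"
  using cat3 by blast
lemma id_hom: "X \<in> Obj C \<Longrightarrow> hom C (Id C X) X X"
  using cat2 by blast
lemma idl: "hom C f X Y \<Longrightarrow> Id C Y \<cdot> f = f"
  using cat4 by blast
lemma idr: "hom C f X Y \<Longrightarrow> f \<cdot> Id C X = f"
  using cat4 by blast
lemma assoc: "hom C f W X \<Longrightarrow> hom C g X Y \<Longrightarrow> hom C h Y Z \<Longrightarrow> h \<cdot> (g \<cdot> f) = (h \<cdot> g) \<cdot> f"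
  using cat5 by blast

lemma to_zero: "zero_obj C Z \<Longrightarrow> X \<in> Obj C \<Longrightarrow> \<exists>!f. hom C f X Z"
  unfolding zero_obj_def terminal_obj_def by blast
lemma from_zero: "zero_obj C Z \<Longrightarrow> X \<in> Obj C \<Longrightarrow> \<exists>!f. hom C f Z X"
  unfolding zero_obj_def initial_obj_def by blast
lemma zero_objD: "zero_obj C Z \<Longrightarrow> Z \<in> Obj C" unfolding zero_obj_def terminal_obj_def by blast
lemma to_zero_uniq: assumes "zero_obj C Z" "hom C f X Z" "hom C g X Z" shows "f = g"
proof -
  have "\<exists>!f. hom C f X Z" using to_zero[OF assms(1)] hom_objs[OF assms(2)] by blast
  then show ?thesis using assms(2,3) by blast
qed
lemma from_zero_uniq: assumes "zero_obj C Z" "hom C f Z X" "hom C g Z X" shows "f = g"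
proof -
  have "\<exists>!f. hom C f Z X" using from_zero[OF assms(1)] hom_objs[OF assms(2)] by blast
  then show ?thesis using assms(2,3) by blast
qed

lemma fact_unique:
  assumes "zero_obj C Z" "zero_obj C Z'" "hom C a X Z" "hom C b Z Y" "hom C a' X Z'" "hom C b' Z' Y"
  shows "b \<cdot> a = b' \<cdot> a'"
proof -
  obtain c where c: "hom C c Z Z'" using from_zero[OF assms(1) zero_objD[OF assms(2)]] by blast
  have 1: "c \<cdot> a = a'" using to_zero_uniq[OF assms(2) comp[OF assms(3) c] assms(5)] .
  have 2: "b' \<cdot> c = b" using from_zero_uniq[OF assms(1) comp[OF c assms(6)] assms(4)] .
  show ?thesis using assoc[OF assms(3) c assms(6)] 1 2 by simp
qed

lemma zero_char:
  assumes "zero_obj C Z" "hom C a X Z" "hom C b Z Y"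
  shows "zero_arr C X Y = b \<cdot> a"
  unfolding zero_arr_def
proof (rule the_equality)
  show "hom C (b \<cdot> a) X Y \<and> (\<exists>Z a' b'. zero_obj C Z \<and> hom C a' X Z \<and> hom C b' Z Y \<and> b \<cdot> a = b' \<cdot> a')"
    using assms comp by blast
  fix f assume "hom C f X Y \<and> (\<exists>Z a b. zero_obj C Z \<and> hom C a X Z \<and> hom C b Z Y \<and> f = b \<cdot> a)"
  then obtain Z' a' b' where z: "zero_obj C Z'" "hom C a' X Z'" "hom C b' Z' Y" "f = b' \<cdot> a'" by blast
  then show "f = b \<cdot> a" using fact_unique[OF assms(1) z(1) assms(2,3) z(2,3)] by simp
qed

lemma zero_fact: assumes "X \<in> Obj C" "Y \<in> Obj C" shows "\<exists>Z a b. zero_obj C Z \<and> hom C a X Z \<and> hom C b Z Y \<and> zero_arr C X Y = b \<cdot> a"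
proof -
  obtain Z where Z: "zero_obj C Z" using ex_zero by blast
  obtain a where a: "hom C a X Z" using to_zero[OF Z assms(1)] by blast
  obtain b where b: "hom C b Z Y" using from_zero[OF Z assms(2)] by blast
  show ?thesis using Z a b zero_char[OF Z a b] by blast
qed

lemma zero_hom: assumes "X \<in> Obj C" "Y \<in> Obj C" shows "hom C (zero_arr C X Y) X Y"
proof -
  obtain Z a b where z: "zero_obj C Z" "hom C a X Z" "hom C b Z Y" "zero_arr C X Y = b \<cdot> a"
    using zero_fact[OF assms] by blast
  show ?thesis using comp[OF z(2,3)] z(4) by simp
qed

lemma zero_comp_r: assumes "hom C f W X" "Y \<in> Obj C" shows "zero_arr C X Y \<cdot> f = zero_arr C W Y"
proof -
  obtain Z a b where z: "zero_obj C Z" "hom C a X Z" "hom C b Z Y" "zero_arr C X Y = b \<cdot> a"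
    using zero_fact[of X Y] hom_objs[OF assms(1)] assms(2) by blast
  have "zero_arr C W Y = b \<cdot> (a \<cdot> f)" using zero_char[OF z(1) comp[OF assms(1) z(2)] z(3)] .
  then show ?thesis using z assoc[OF assms(1) z(2) z(3)] by simp
qed

lemma zero_comp_l: assumes "hom C g Y V" "X \<in> Obj C" shows "g \<cdot> zero_arr C X Y = zero_arr C X V"
proof -
  obtain Z a b where z: "zero_obj C Z" "hom C a X Z" "hom C b Z Y" "zero_arr C X Y = b \<cdot> a"
    using zero_fact[of X Y] hom_objs[OF assms(1)] assms(2) by blast
  have "zero_arr C X V = (g \<cdot> b) \<cdot> a" using zero_char[OF z(1) z(2) comp[OF z(3) assms(1)]] .
  then show ?thesis using z assoc[OF z(2) z(3) assms(1)] by simp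
qed

lemma prod_homs: "is_product C A B P p1 p2 \<Longrightarrow> hom C p1 P A \<and> hom C p2 P B" unfolding is_product_def by blast

lemma prod_uniq: assumes "is_product C A B P p1 p2" "hom C h W P" "hom C h' W P"
  "p1 \<cdot> h = p1 \<cdot> h'" "p2 \<cdot> h = p2 \<cdot> h'" shows "h = h'"
proof -
  have p: "hom C p1 P A" "hom C p2 P B" using prod_homs[OF assms(1)] by auto
  have "\<exists>!k. hom C k W P \<and> p1 \<cdot> k = p1 \<cdot> h \<and> p2 \<cdot> k = p2 \<cdot> h"
    using assms(1) comp[OF assms(2) p(1)] comp[OF assms(2) p(2)] unfolding is_product_def by blast
  then show ?thesis using assms by metis
qed

lemma prod_pair: "is_product C A B P p1 p2 \<Longrightarrow> hom C u W A \<Longrightarrow> hom C v W B \<Longrightarrow> \<exists>h. hom C h W P \<and> p1 \<cdot> h = u \<and> p2 \<cdot> h = v"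
  unfolding is_product_def by blast

lemma prod_exists: assumes "A \<in> Obj C" "B \<in> Obj C" shows "\<exists>P p1 p2. is_product C A B P p1 p2"
proof -
  obtain Z where Z: "zero_obj C Z" using ex_zero by blast
  obtain ta where ta: "hom C ta A Z" using to_zero[OF Z assms(1)] by blast
  obtain tb where tb: "hom C tb B Z" using to_zero[OF Z assms(2)] by blast
  have "\<exists>P p q. is_pullback C ta tb P p q" using fl ta tb unfolding finite_limits_def hom_def by metis
  then obtain P p q where pb: "is_pullback C ta tb P p q" by blast
  have D: "Dom C ta = A" "Dom C tb = B" using ta tb homD by auto
  have "is_product C A B P p q"
    unfolding is_product_def
  proof (intro conjI allI impI)
    show "hom C p P A" "hom C q P B" using pb D unfolding is_pullback_def by auto
    fix W u v assume u: "hom C u W A" and v: "hom C v W B"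
    have "ta \<cdot> u = tb \<cdot> v" using to_zero_uniq[OF Z comp[OF u ta] comp[OF v tb]] .
    then show "\<exists>!h. hom C h W P \<and> p \<cdot> h = u \<and> q \<cdot> h = v"
      using pb u v D unfolding is_pullback_def by auto
  qed
  then show ?thesis by blast
qed

lemma kernel_hom: "is_kernel C p k \<Longrightarrow> hom C k (Dom C k) (Dom C p)" unfolding is_kernel_def by blast

lemma kernel_mono: assumes "is_kernel C p k" "hom C h W (Dom C k)" "hom C h' W (Dom C k)" "k \<cdot> h = k \<cdot> h'" shows "h = h'"
proof -
  have k: "hom C k (Dom C k) (Dom C p)" and pk: "p \<cdot> k = zero_arr C (Dom C k) (Cod C p)" using assms(1) unfolding is_kernel_def by auto
  have p: "hom C p (Dom C p) (Cod C p)" using assms(1) unfolding is_kernel_def hom_def by auto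
  have u: "hom C (k \<cdot> h) W (Dom C p)" using comp[OF assms(2) k] .
  have "p \<cdot> (k \<cdot> h) = zero_arr C W (Cod C p)"
    using assoc[OF assms(2) k p] pk zero_comp_r[OF assms(2)] hom_objs[OF p] by simp
  then have "\<exists>!x. hom C x W (Dom C k) \<and> k \<cdot> x = k \<cdot> h" using assms(1) u unfolding is_kernel_def by blast
  then show ?thesis using assms by metis
qed

lemma prod_kernel: assumes P: "is_product C B X P q1 q2" and i2: "hom C i2 X P"
  and e1: "q1 \<cdot> i2 = zero_arr C X B" and e2: "q2 \<cdot> i2 = Id C X"
  shows "is_kernel C q1 i2"
proof -
  have q: "hom C q1 P B" "hom C q2 P X" using prod_homs[OF P] by auto
  have D: "Dom C i2 = X" "Dom C q1 = P" "Cod C q1 = B" using i2 q homD by auto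
  show ?thesis unfolding is_kernel_def D
  proof (intro conjI allI impI)
    show "q1 \<in> Arr C" using q homD by blast
    show "hom C i2 X P" by fact
    show "q1 \<cdot> i2 = zero_arr C X B" by fact
    fix W u assume u: "hom C u W P" and qu: "q1 \<cdot> u = zero_arr C W B"
    have h: "hom C (q2 \<cdot> u) W X" using comp[OF u q(2)] .
    have "i2 \<cdot> (q2 \<cdot> u) = u"
    proof (rule prod_uniq[OF P comp[OF h i2] u])
      show "q1 \<cdot> (i2 \<cdot> (q2 \<cdot> u)) = q1 \<cdot> u"
        using assoc[OF h i2 q(1)] e1 zero_comp_r[OF h] qu hom_objs[OF q(1)] by simp
      show "q2 \<cdot> (i2 \<cdot> (q2 \<cdot> u)) = q2 \<cdot> u"
        using assoc[OF h i2 q(2)] e2 idl[OF h] by simp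
    qed
    moreover have "h' = q2 \<cdot> u" if h': "hom C h' W X" and e: "i2 \<cdot> h' = u" for h'
    proof -
      have "q2 \<cdot> u = (q2 \<cdot> i2) \<cdot> h'" using e assoc[OF h' i2 q(2)] by simp
      then show ?thesis using e2 idl[OF h'] by simp
    qed
    ultimately show "\<exists>!h. hom C h W X \<and> i2 \<cdot> h = u" using h by blast
  qed
qed


lemma iso_id: assumes X: "X \<in> Obj C" shows "iso C (Id C X)"
proof -
  have h: "hom C (Id C X) X X" using id_hom[OF X] .
  then have "Id C X \<in> Arr C" "Dom C (Id C X) = X" "Cod C (Id C X) = X" using homD by auto
  moreover have "Id C X \<cdot> Id C X = Id C X" using idl[OF h] .
  ultimately show ?thesis unfolding iso_def using h by auto
qed

lemma equalizer_exists:
  assumes f: "hom C f A Y" and f': "hom C f' A Y"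
  shows "\<exists>E e. hom C e E A \<and> f \<cdot> e = f' \<cdot> e \<and>
     (\<forall>W u. hom C u W A \<longrightarrow> f \<cdot> u = f' \<cdot> u \<longrightarrow> (\<exists>h. hom C h W E \<and> e \<cdot> h = u)) \<and>
     (\<forall>W h h'. hom C h W E \<longrightarrow> hom C h' W E \<longrightarrow> e \<cdot> h = e \<cdot> h' \<longrightarrow> h = h')"
proof -
  have A: "A \<in> Obj C" and Y: "Y \<in> Obj C" using hom_objs[OF f] by auto
  obtain Q q1 q2 where Q: "is_product C A Y Q q1 q2" using prod_exists[OF A Y] by blast
  have q: "hom C q1 Q A" "hom C q2 Q Y" using prod_homs[OF Q] by auto
  obtain g1 where g1: "hom C g1 A Q" "q1 \<cdot> g1 = Id C A" "q2 \<cdot> g1 = f" using prod_pair[OF Q id_hom[OF A] f] by blast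
  obtain g2 where g2: "hom C g2 A Q" "q1 \<cdot> g2 = Id C A" "q2 \<cdot> g2 = f'" using prod_pair[OF Q id_hom[OF A] f'] by blast
  have "g1 \<in> Arr C" "g2 \<in> Arr C" "Cod C g1 = Cod C g2" using g1(1) g2(1) homD by auto
  then have "\<exists>P p q. is_pullback C g1 g2 P p q" using fl unfolding finite_limits_def by blast
  then obtain E a b where pb: "is_pullback C g1 g2 E a b" by blast
  have D: "Dom C g1 = A" "Dom C g2 = A" using g1 g2 homD by auto
  have a: "hom C a E A" and b: "hom C b E A" and ab: "g1 \<cdot> a = g2 \<cdot> b" using pb D unfolding is_pullback_def by auto
  have univ: "\<And>W u v. hom C u W A \<Longrightarrow> hom C v W A \<Longrightarrow> g1 \<cdot> u = g2 \<cdot> v \<Longrightarrow> \<exists>!h. hom C h W E \<and> a \<cdot> h = u \<and> b \<cdot> h = v"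
    using pb D unfolding is_pullback_def by auto
  have "q1 \<cdot> (g1 \<cdot> a) = a" using assoc[OF a g1(1) q(1)] g1(2) idl[OF a] by simp
  moreover have "q1 \<cdot> (g2 \<cdot> b) = b" using assoc[OF b g2(1) q(1)] g2(2) idl[OF b] by simp
  ultimately have aeb: "a = b" using ab by simp
  have eq: "f \<cdot> a = f' \<cdot> a"
  proof -
    have "q2 \<cdot> (g1 \<cdot> a) = f \<cdot> a" using assoc[OF a g1(1) q(2)] g1(3) by simp
    moreover have "q2 \<cdot> (g2 \<cdot> b) = f' \<cdot> b" using assoc[OF b g2(1) q(2)] g2(3) by simp
    ultimately show ?thesis using ab aeb by simp
  qed
  have U: "\<exists>h. hom C h W E \<and> a \<cdot> h = u" if u: "hom C u W A" and fu: "f \<cdot> u = f' \<cdot> u" for W u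
  proof -
    have "g1 \<cdot> u = g2 \<cdot> u"
    proof (rule prod_uniq[OF Q comp[OF u g1(1)] comp[OF u g2(1)]])
      show "q1 \<cdot> (g1 \<cdot> u) = q1 \<cdot> (g2 \<cdot> u)" using assoc[OF u g1(1) q(1)] assoc[OF u g2(1) q(1)] g1(2) g2(2) by simp
      show "q2 \<cdot> (g1 \<cdot> u) = q2 \<cdot> (g2 \<cdot> u)" using assoc[OF u g1(1) q(2)] assoc[OF u g2(1) q(2)] g1(3) g2(3) fu by simp
    qed
    then show ?thesis using univ[OF u u] by blast
  qed
  have M: "h = h'" if h: "hom C h W E" and h': "hom C h' W E" and e: "a \<cdot> h = a \<cdot> h'" for W h h'
  proof -
    have ah: "hom C (a \<cdot> h) W A" using comp[OF h a] .
    have "g1 \<cdot> (a \<cdot> h) = g2 \<cdot> (a \<cdot> h)" using assoc[OF h a g1(1)] assoc[OF h b g2(1)] ab aeb by simp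
    then have "\<exists>!x. hom C x W E \<and> a \<cdot> x = a \<cdot> h \<and> b \<cdot> x = a \<cdot> h" using univ[OF ah ah] by blast
    moreover have "hom C h W E \<and> a \<cdot> h = a \<cdot> h \<and> b \<cdot> h = a \<cdot> h" using h aeb by simp
    moreover have "hom C h' W E \<and> a \<cdot> h' = a \<cdot> h \<and> b \<cdot> h' = a \<cdot> h" using h' e aeb by simp
    ultimately show ?thesis by blast
  qed
  have U': "\<forall>W u. hom C u W A \<longrightarrow> f \<cdot> u = f' \<cdot> u \<longrightarrow> (\<exists>h. hom C h W E \<and> a \<cdot> h = u)" using U by blast
  have M': "\<forall>W h h'. hom C h W E \<longrightarrow> hom C h' W E \<longrightarrow> a \<cdot> h = a \<cdot> h' \<longrightarrow> h = h'" using M by blast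
  show ?thesis using a eq U' M' by blast
qed

lemma joint_epi:
  assumes se: "split_ext C k p s" and f0: "hom C f (Dom C p) Y" and f0': "hom C f' (Dom C p) Y"
    and ek: "f \<cdot> k = f' \<cdot> k" and es: "f \<cdot> s = f' \<cdot> s"
  shows "f = f'"
proof -
  define A B X where "A = Dom C p" and "B = Cod C p" and "X = Dom C k"
  have ker: "is_kernel C p k" and s: "hom C s B A" and ps: "p \<cdot> s = Id C B" using se unfolding split_ext_def A_def B_def by auto
  have k: "hom C k X A" using kernel_hom[OF ker] unfolding A_def X_def .
  have p: "hom C p A B" using ker unfolding is_kernel_def hom_def A_def B_def by auto
  have pk: "p \<cdot> k = zero_arr C X B" using ker unfolding is_kernel_def X_def B_def by auto
  have f: "hom C f A Y" and f': "hom C f' A Y" using f0 f0' A_def by auto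
  obtain E e where e: "hom C e E A" "f \<cdot> e = f' \<cdot> e"
    and eu: "\<And>W u. hom C u W A \<Longrightarrow> f \<cdot> u = f' \<cdot> u \<Longrightarrow> \<exists>h. hom C h W E \<and> e \<cdot> h = u"
    and em: "\<And>W h h'. hom C h W E \<Longrightarrow> hom C h' W E \<Longrightarrow> e \<cdot> h = e \<cdot> h' \<Longrightarrow> h = h'"
    using equalizer_exists[OF f f'] by blast
  obtain kE where kE: "hom C kE X E" "e \<cdot> kE = k" using eu[OF k ek] by blast
  obtain sE where sE: "hom C sE B E" "e \<cdot> sE = s" using eu[OF s es] by blast
  have pe: "hom C (p \<cdot> e) E B" using comp[OF e(1) p] .
  have DkE: "Dom C kE = X" using kE homD by blast
  have Dpe: "Dom C (p \<cdot> e) = E" "Cod C (p \<cdot> e) = B" using pe homD by auto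
  have kerE: "is_kernel C (p \<cdot> e) kE"
    unfolding is_kernel_def DkE Dpe
  proof (intro conjI allI impI)
    show "p \<cdot> e \<in> Arr C" using pe homD by blast
    show "hom C kE X E" using kE by blast
    show "(p \<cdot> e) \<cdot> kE = zero_arr C X B"
      using assoc[OF kE(1) e(1) p] kE pk by simp
    fix W u assume u': "hom C u W E" and pu: "(p \<cdot> e) \<cdot> u = zero_arr C W B"
    have eu': "hom C (e \<cdot> u) W A" using comp[OF u' e(1)] .
    have "p \<cdot> (e \<cdot> u) = zero_arr C W (Cod C p)" using pu assoc[OF u' e(1) p] B_def by simp
    moreover have "\<And>W u. hom C u W A \<Longrightarrow> p \<cdot> u = zero_arr C W (Cod C p) \<Longrightarrow> \<exists>!h. hom C h W X \<and> k \<cdot> h = u"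
      using ker unfolding is_kernel_def A_def X_def by blast
    ultimately obtain h where h: "hom C h W X" "k \<cdot> h = e \<cdot> u" using eu' by blast
    have kh: "kE \<cdot> h = u" using em[OF comp[OF h(1) kE(1)] u'] assoc[OF h(1) kE(1) e(1)] kE(2) h(2) by simp
    have un: "h' = h" if h': "hom C h' W X" "kE \<cdot> h' = u" for h'
    proof -
      have "k \<cdot> h' = e \<cdot> u" using assoc[OF h'(1) kE(1) e(1)] kE(2) h'(2) by simp
      then show ?thesis using kernel_mono[OF ker h'(1)[unfolded X_def] h(1)[unfolded X_def]] h(2) by simp
    qed
    show "\<exists>!h. hom C h W X \<and> kE \<cdot> h = u" using h(1) kh un by blast
  qed
  have pes: "(p \<cdot> e) \<cdot> sE = Id C B" using assoc[OF sE(1) e(1) p] sE(2) ps by simp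
  have se1: "split_ext C kE (p \<cdot> e) sE" unfolding split_ext_def Dpe using kerE sE(1) pes by simp
  have XO: "X \<in> Obj C" and BO: "B \<in> Obj C" using hom_objs[OF k] hom_objs[OF p] by auto
  have Dk: "Dom C k = X" "Dom C p = A" "Cod C p = B" using A_def B_def X_def by auto
  have "split_ext_morph C kE (p \<cdot> e) sE k p s (Id C X) e (Id C B)"
    unfolding split_ext_morph_def Dpe DkE Dk
  proof (intro conjI)
    show "split_ext C kE (p \<cdot> e) sE" by fact
    show "split_ext C k p s" by fact
    show "hom C (Id C X) X X" using id_hom[OF XO] .
    show "hom C e E A" by fact
    show "hom C (Id C B) B B" using id_hom[OF BO] .
    show "e \<cdot> kE = k \<cdot> Id C X" using kE(2) idr[OF k] by simp
    show "p \<cdot> e = Id C B \<cdot> (p \<cdot> e)" using idl[OF pe] by simp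
    show "e \<cdot> sE = s \<cdot> Id C B" using sE(2) idr[OF s] by simp
  qed
  then have "iso C e" using pm iso_id hom_objs[OF k] hom_objs[OF p] unfolding protomodular_def by blast
  moreover have "Cod C e = A" "Dom C e = E" using e(1) homD by auto
  ultimately obtain e' where e': "hom C e' A E" "e' \<cdot> e = Id C E" "e \<cdot> e' = Id C A"
    unfolding iso_def by auto
  have "f = (f \<cdot> e) \<cdot> e'" using assoc[OF e'(1) e(1) f] e'(3) idr[OF f] by simp
  also have "\<dots> = (f' \<cdot> e) \<cdot> e'" using e(2) by simp
  also have "\<dots> = f'" using assoc[OF e'(1) e(1) f'] e'(3) idr[OF f'] by simp
  finally show ?thesis .
qed


lemma commutes_intro:
  assumes "hom C g B X" "is_product C B X P p1 p2" "hom C i1 B P" "p1 \<cdot> i1 = Id C B"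
    "p2 \<cdot> i1 = zero_arr C B X" "hom C i2 X P" "p1 \<cdot> i2 = zero_arr C X B" "p2 \<cdot> i2 = Id C X"
    "hom C \<phi> P X" "\<phi> \<cdot> i1 = g" "\<phi> \<cdot> i2 = Id C X"
  shows "commutes_with_id C X g"
proof -
  have D: "Dom C g = B" using assms(1) homD by blast
  show ?thesis unfolding commutes_with_id_def D
    by (intro conjI exI) (rule assms)+
qed

lemma trivial_center_intro:
  assumes X: "X \<in> Obj C" and H: "\<And>g. commutes_with_id C X g \<Longrightarrow> g = zero_arr C (Dom C g) X"
  shows "trivial_center C X"
proof -
  obtain Z where Z: "zero_obj C Z" using ex_zero by blast
  have ZO: "Z \<in> Obj C" using zero_objD[OF Z] .
  define z where "z = zero_arr C Z X"
  have z: "hom C z Z X" using zero_hom[OF ZO X] z_def by simp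
  have Dz: "Dom C z = Z" using z homD by blast
  have x0: "hom C (zero_arr C X Z) X Z" using zero_hom[OF X ZO] .
  have idX: "hom C (Id C X) X X" using id_hom[OF X] .
  have prod: "is_product C Z X X (zero_arr C X Z) (Id C X)"
    unfolding is_product_def
  proof (intro conjI allI impI)
    show "hom C (zero_arr C X Z) X Z" by fact
    show "hom C (Id C X) X X" by fact
    fix W u v assume u: "hom C u W Z" and v: "hom C v W X"
    have 1: "zero_arr C X Z \<cdot> v = u" using to_zero_uniq[OF Z comp[OF v x0] u] .
    have 2: "Id C X \<cdot> v = v" using idl[OF v] .
    show "\<exists>!h. hom C h W X \<and> zero_arr C X Z \<cdot> h = u \<and> Id C X \<cdot> h = v"
    proof (rule ex1I[of _ v])
      show "hom C v W X \<and> zero_arr C X Z \<cdot> v = u \<and> Id C X \<cdot> v = v" using v 1 2 by (intro conjI)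
      fix h assume "hom C h W X \<and> zero_arr C X Z \<cdot> h = u \<and> Id C X \<cdot> h = v"
      then show "h = v" using idl[of h W X] by (elim conjE) simp
    qed
  qed
  have e1: "zero_arr C X Z \<cdot> z = Id C Z" using to_zero_uniq[OF Z comp[OF z x0] id_hom[OF ZO]] .
  have e2: "Id C X \<cdot> z = zero_arr C Z X" using idl[OF z] z_def by simp
  have e3: "zero_arr C X Z \<cdot> Id C X = zero_arr C X Z" using idr[OF x0] .
  have e4: "Id C X \<cdot> Id C X = Id C X" using idl[OF idX] .
  have e5: "Id C X \<cdot> z = z" using idl[OF z] .
  have cz: "commutes_with_id C X z"
    using commutes_intro[OF z prod z e1 e2 idX e3 e4 idX e5 e4] .
  have "is_center C X Z z"
    unfolding is_center_def
  proof (intro conjI allI impI)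
    show "hom C z Z X" by fact
    show "commutes_with_id C X z" by fact
    fix g assume cg: "commutes_with_id C X g"
    have g: "hom C g (Dom C g) X" using cg unfolding commutes_with_id_def by (rule conjunct1)
    have DO: "Dom C g \<in> Obj C" using hom_objs[OF g] by blast
    obtain h where h: "hom C h (Dom C g) Z" using to_zero[OF Z DO] by blast
    have e: "z \<cdot> h = zero_arr C (Dom C g) X" using zero_comp_r[OF h X] z_def by simp
    have "z \<cdot> h = g" using trans[OF e H[OF cg, symmetric]] .
    moreover have "h' = h" if "hom C h' (Dom C g) Z" for h' using to_zero_uniq[OF Z that h] .
    ultimately show "\<exists>!h. hom C h (Dom C g) Z \<and> z \<cdot> h = g" using h by blast
  qed
  then show ?thesis unfolding trivial_center_def using Z by blast
qed

lemma center_zero: assumes "trivial_center C X" "commutes_with_id C X g" shows "g = zero_arr C (Dom C g) X"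
proof -
  obtain Z z where c: "is_center C X Z z" and Z: "zero_obj C Z" using assms(1) unfolding trivial_center_def by blast
  have z: "hom C z Z X" using c unfolding is_center_def by blast
  obtain h where h: "hom C h (Dom C g) Z" "z \<cdot> h = g" using c assms(2) unfolding is_center_def by blast
  show ?thesis using zero_char[OF Z h(1) z] h(2) by simp
qed

lemma strong_imp_triv: assumes X: "X \<in> Obj C" and sc: "strong_complete C X" shows "trivial_center C X"
proof (rule trivial_center_intro[OF X])
  fix g assume "commutes_with_id C X g"
  then obtain P p1 p2 i1 i2 \<phi> where g: "hom C g (Dom C g) X" and
    P: "is_product C (Dom C g) X P p1 p2" and
    i1: "hom C i1 (Dom C g) P" "p1 \<cdot> i1 = Id C (Dom C g)" "p2 \<cdot> i1 = zero_arr C (Dom C g) X" and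
    i2: "hom C i2 X P" "p1 \<cdot> i2 = zero_arr C X (Dom C g)" "p2 \<cdot> i2 = Id C X" and
    phi: "hom C \<phi> P X" "\<phi> \<cdot> i1 = g" "\<phi> \<cdot> i2 = Id C X"
    unfolding commutes_with_id_def by blast
  have ker: "is_kernel C p1 i2" using prod_kernel[OF P i2] .
  have p: "hom C p1 P (Dom C g)" "hom C p2 P X" using prod_homs[OF P] by auto
  have Dp: "Cod C p1 = Dom C g" "Dom C p1 = P" "p1 \<in> Arr C" using p homD by auto
  have "split_epi C p1" unfolding split_epi_def Dp using i1 Dp by blast
  then have "protosplit_mono C i2" using ker unfolding protosplit_mono_def by blast
  moreover have "Dom C i2 = X" "Cod C i2 = P" using i2 homD by auto
  moreover have "\<forall>k. protosplit_mono C k \<longrightarrow> Dom C k = X \<longrightarrow>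
        (\<exists>!r. hom C r (Cod C k) X \<and> Comp C r k = Id C X)" using sc unfolding strong_complete_def .
  ultimately have "\<exists>!r. hom C r (Cod C i2) X \<and> r \<cdot> i2 = Id C X" by blast
  then have "\<exists>!r. hom C r P X \<and> r \<cdot> i2 = Id C X" using \<open>Cod C i2 = P\<close> by simp
  then have "\<phi> = p2" using phi p i2 by blast
  then show "g = zero_arr C (Dom C g) X" using phi i1 by simp
qed

lemma proto_triv_imp_strong: assumes X: "X \<in> Obj C" and pc: "proto_complete C X" and tc: "trivial_center C X"
  shows "strong_complete C X"
  unfolding strong_complete_def
proof (intro allI impI)
  fix k assume psm: "protosplit_mono C k" and Dk: "Dom C k = X"
  obtain p where sp: "split_epi C p" and ker: "is_kernel C p k" using psm unfolding protosplit_mono_def by blast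
  define A B where "A = Dom C p" and "B = Cod C p"
  obtain s where s: "hom C s B A" "p \<cdot> s = Id C B" using sp unfolding split_epi_def A_def B_def by blast
  have k: "hom C k X A" using kernel_hom[OF ker] Dk A_def by simp
  have Ck: "Cod C k = A" using k homD by blast
  have p: "hom C p A B" using ker unfolding is_kernel_def hom_def A_def B_def by auto
  have pk: "p \<cdot> k = zero_arr C X B" using ker Dk unfolding is_kernel_def A_def B_def by auto
  have se: "split_ext C k p s" unfolding split_ext_def using ker s A_def B_def by simp
  have AO: "A \<in> Obj C" and BO: "B \<in> Obj C" using hom_objs[OF p] by auto
  have "split_mono C k" using pc psm Dk unfolding proto_complete_def by blast
  then obtain r0 where r0: "hom C r0 A X" "r0 \<cdot> k = Id C X" using Dk Ck unfolding split_mono_def by auto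
  have uniq: "r = r'" if r: "hom C r A X" "r \<cdot> k = Id C X" and r': "hom C r' A X" "r' \<cdot> k = Id C X" for r r'
  proof -
    obtain P q1 q2 where P: "is_product C B X P q1 q2" using prod_exists[OF BO X] by blast
    have q: "hom C q1 P B" "hom C q2 P X" using prod_homs[OF P] by auto
    obtain i1 where i1: "hom C i1 B P" "q1 \<cdot> i1 = Id C B" "q2 \<cdot> i1 = zero_arr C B X"
      using prod_pair[OF P id_hom[OF BO] zero_hom[OF BO X]] by blast
    obtain i2 where i2: "hom C i2 X P" "q1 \<cdot> i2 = zero_arr C X B" "q2 \<cdot> i2 = Id C X"
      using prod_pair[OF P zero_hom[OF X BO] id_hom[OF X]] by blast
    have rs: "hom C (r \<cdot> s) B X" using comp[OF s(1) r(1)] .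
    obtain \<sigma> where sg: "hom C \<sigma> B P" "q1 \<cdot> \<sigma> = Id C B" "q2 \<cdot> \<sigma> = r \<cdot> s"
      using prod_pair[OF P id_hom[OF BO] rs] by blast
    obtain m where m: "hom C m A P" "q1 \<cdot> m = p" "q2 \<cdot> m = r" using prod_pair[OF P p r(1)] by blast
    have ker2: "is_kernel C q1 i2" using prod_kernel[OF P i2] .
    have D: "Dom C i2 = X" "Dom C q1 = P" "Cod C q1 = B" using i2 q homD by auto
    have se2: "split_ext C i2 q1 \<sigma>" unfolding split_ext_def D using ker2 sg by simp
    have se3: "split_ext C i2 q1 i1" unfolding split_ext_def D using ker2 i1 by simp
    have mk: "m \<cdot> k = i2"
    proof (rule prod_uniq[OF P comp[OF k m(1)] i2(1)])
      show "q1 \<cdot> (m \<cdot> k) = q1 \<cdot> i2" using assoc[OF k m(1) q(1)] m(2) pk i2(2) by simp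
      show "q2 \<cdot> (m \<cdot> k) = q2 \<cdot> i2" using assoc[OF k m(1) q(2)] m(3) r(2) i2(3) by simp
    qed
    have ms: "m \<cdot> s = \<sigma>"
    proof (rule prod_uniq[OF P comp[OF s(1) m(1)] sg(1)])
      show "q1 \<cdot> (m \<cdot> s) = q1 \<cdot> \<sigma>" using assoc[OF s(1) m(1) q(1)] m(2) s(2) sg(2) by simp
      show "q2 \<cdot> (m \<cdot> s) = q2 \<cdot> \<sigma>" using assoc[OF s(1) m(1) q(2)] m(3) sg(3) by simp
    qed
    have DD: "Dom C k = X" "Dom C p = A" "Cod C p = B" using Dk A_def B_def by auto
    have "split_ext_morph C k p s i2 q1 \<sigma> (Id C X) m (Id C B)"
      unfolding split_ext_morph_def D DD
    proof (intro conjI)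
      show "split_ext C k p s" by fact
      show "split_ext C i2 q1 \<sigma>" by fact
      show "hom C (Id C X) X X" using id_hom[OF X] .
      show "hom C m A P" by fact
      show "hom C (Id C B) B B" using id_hom[OF BO] .
      show "m \<cdot> k = i2 \<cdot> Id C X" using mk idr[OF i2(1)] by simp
      show "q1 \<cdot> m = Id C B \<cdot> p" using m(2) idl[OF p] by simp
      show "m \<cdot> s = \<sigma> \<cdot> Id C B" using ms idr[OF sg(1)] by simp
    qed
    then have "iso C m" using pm iso_id[OF X] iso_id[OF BO] unfolding protomodular_def by blast
    moreover have "Cod C m = P" "Dom C m = A" using m(1) homD by auto
    ultimately obtain m' where m': "hom C m' P A" "m' \<cdot> m = Id C A" "m \<cdot> m' = Id C P"
      unfolding iso_def by auto
    have phi: "hom C (r' \<cdot> m') P X" using comp[OF m'(1) r'(1)] .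
    have psi: "hom C (r \<cdot> m') P X" using comp[OF m'(1) r(1)] .
    have m'i2: "m' \<cdot> i2 = k" using mk assoc[OF k m(1) m'(1)] m'(2) idl[OF k] by simp
    have c2: "(r' \<cdot> m') \<cdot> i2 = Id C X" using assoc[OF i2(1) m'(1) r'(1)] m'i2 r'(2) by simp
    have c2': "(r \<cdot> m') \<cdot> i2 = Id C X" using assoc[OF i2(1) m'(1) r(1)] m'i2 r(2) by simp
    have comm: "commutes_with_id C X (\<phi> \<cdot> i1)" if ph: "hom C \<phi> P X" "\<phi> \<cdot> i2 = Id C X" for \<phi>
    proof -
      have h: "hom C (\<phi> \<cdot> i1) B X" using comp[OF i1(1) ph(1)] .
      have Dd: "Dom C (\<phi> \<cdot> i1) = B" using h homD by blast
      show ?thesis using commutes_intro[OF h P i1 i2 ph(1) refl ph(2)] .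
    qed
    have Dphi: "Dom C ((r' \<cdot> m') \<cdot> i1) = B" "Dom C ((r \<cdot> m') \<cdot> i1) = B"
      using comp[OF i1(1) phi] comp[OF i1(1) psi] homD by auto
    have z1: "(r' \<cdot> m') \<cdot> i1 = zero_arr C B X" using center_zero[OF tc comm[OF phi c2]] Dphi by simp
    have z2: "(r \<cdot> m') \<cdot> i1 = zero_arr C B X" using center_zero[OF tc comm[OF psi c2']] Dphi by simp
    have eqf: "r \<cdot> m' = r' \<cdot> m'"
      using joint_epi[OF se3, of "r \<cdot> m'" X "r' \<cdot> m'"] D psi phi c2 c2' z1 z2 by simp
    have "r = (r \<cdot> m') \<cdot> m" using assoc[OF m(1) m'(1) r(1)] m'(2) idr[OF r(1)] by simp
    also have "\<dots> = (r' \<cdot> m') \<cdot> m" using eqf by simp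
    also have "\<dots> = r'" using assoc[OF m(1) m'(1) r'(1)] m'(2) idr[OF r'(1)] by simp
    finally show ?thesis .
  qed
  show "\<exists>!r. hom C r (Cod C k) X \<and> r \<cdot> k = Id C X" using r0 uniq Ck by blast
qed

end

theorem proposition4p5:
  fixes C :: "('o, 'a) cat" and X :: 'o
  assumes "pointed_protomodular C"
    and "X \<in> Obj C"
  shows "strong_complete C X \<longleftrightarrow> proto_complete C X \<and> trivial_center C X"
proof -
  interpret ppc C by (rule ppc.intro) (rule assms(1))
  have sp: "proto_complete C X" if sc: "strong_complete C X"
    unfolding proto_complete_def
  proof (intro allI impI)
    fix k assume psm: "protosplit_mono C k" and Dk: "Dom C k = X"
    obtain p where "is_kernel C p k" using psm unfolding protosplit_mono_def by blast
    then have "k \<in> Arr C" using kernel_hom homD by blast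
    moreover obtain r where "hom C r (Cod C k) X" "Comp C r k = Id C X" using sc psm Dk unfolding strong_complete_def by blast
    ultimately show "split_mono C k" unfolding split_mono_def using Dk by auto
  qed
  show ?thesis using sp strong_imp_triv[OF assms(2)] proto_triv_imp_strong[OF assms(2)] by blast
qed

end
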